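(* Let $d\ge2$, let $\mathcal H\subset\mathbb S_1^{d-1}$ be an open hemisphere, and suppose $\mathcal D\subset\mathbb S_1^{d-1}$ has non-empty interior and closure contained in $\mathcal H$. Then there is a constant $c_{\mathcal D}>0$ such that for any $\epsilon>0$ there exist an open set $\mathcal U_\epsilon\subset\Gamma\backslash G$ and an integer $N_\epsilon$ such that $\mathcal G_{\mathcal D,N}(M)\ge c_{\mathcal D}\,\epsilon^{-1}$ for all $\Gamma M\in\mathcal U_\epsilon$ and all $N\ge N_\epsilon$.
   Context: $G=\mathrm{SL}(d+1,\mathbb R)$, $\Gamma=\mathrm{SL}(d+1,\mathbb Z)$. Row vectors in $\mathbb R^{d+1}$ are written $(u,\vec v)$; $\mathbb Z^{d+1}M=\{\vec mM:\vec m\in\mathbb Z^{d+1}\}$. $F_{\mathcal D}(M,t)=\min\{|\vec v|:(u,\vec v)\in\mathbb Z^{d+1}M,\ -t<u<1-t,\ \vec v\in\mathbb R_{>0}\mathcal D\}$ for $t\in(0,1)$. For $N\in\mathbb N$ put $N_+=N+\tfrac12$ and $\mathcal G_{\mathcal D,N}(M)=|\{F_{\mathcal D}(M,\tfrac{n}{N_+}):1\le n\le N\}|$. *)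

theory Defs
  imports "HOL-Analysis.Analysis"
begin

text \<open>R^d is modelled by real^'d (CARD('d) = d); R^(d+1) by
 real^('d option), the coordinate None being the first coordinate u and
 Some i the coordinates of the vector v. Row vectors act on matrices from
 the left (x v* M).\<close>

definition SLR :: "(real^'n^'n) set" where
  "SLR = {M. det M = 1}"

definition SLZ :: "(real^'n^'n) set" where
  "SLZ = {M. det M = 1 \<and> (\<forall>i j. M $ i $ j \<in> \<int>)}"

definition lattice_of :: "real^'n^'n \<Rightarrow> (real^'n) set" where
  "lattice_of M = {m v* M | m. \<forall>i. m $ i \<in> \<int>}"

definition u_part :: "real^('d::finite option) \<Rightarrow> real" where
  "u_part w = w $ None"

definition v_part :: "real^('d::finite option) \<Rightarrow> real^'d" where
  "v_part w = (\<chi> i. w $ Some i)"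

definition open_hemisphere :: "real^'d \<Rightarrow> (real^'d) set" where
  "open_hemisphere a = {x \<in> sphere 0 1. a \<bullet> x > 0}"

definition F_D :: "(real^'d::finite) set \<Rightarrow> real^('d::finite option)^('d option) \<Rightarrow> real \<Rightarrow> real" where
  "F_D D M t = Inf {norm (v_part w) | w. w \<in> lattice_of M \<and> - t < u_part w \<and> u_part w < 1 - t
                    \<and> (\<exists>r>0. \<exists>x\<in>D. v_part w = r *\<^sub>R x)}"

definition G_DN :: "(real^'d::finite) set \<Rightarrow> nat \<Rightarrow> real^('d::finite option)^('d option) \<Rightarrow> nat" where
  "G_DN D N M = card {F_D D M (real n / (real N + 1/2)) | n. 1 \<le> n \<and> n \<le> N}"

end

theory Submission
  imports Defs
begin



lemma sum_option_UNIV: "(\<Sum>k\<in>(UNIV::'a::finite option set). f k) = f None + (\<Sum>i\<in>UNIV. f (Some i))"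
  by (simp add: UNIV_option_conv sum.reindex)

definition mk :: "real \<Rightarrow> real^'d::finite \<Rightarrow> real^('d option)" where
  "mk u v = (\<chi> k. case k of None \<Rightarrow> u | Some i \<Rightarrow> v $ i)"

lemma u_mk[simp]: "u_part (mk u v) = u" by (simp add: mk_def u_part_def)
lemma v_mk[simp]: "v_part (mk u v) = v" by (simp add: mk_def v_part_def vec_eq_iff)
lemma mk_uv: "mk (u_part w) (v_part w) = w"
  by (simp add: mk_def u_part_def v_part_def vec_eq_iff split: option.splits)
lemma u_add[simp]: "u_part (x + y) = u_part x + u_part y" by (simp add: u_part_def)
lemma u_diff[simp]: "u_part (x - y) = u_part x - u_part y" by (simp add: u_part_def)
lemma u_scale[simp]: "u_part (c *\<^sub>R x) = c * u_part x" by (simp add: u_part_def)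
lemma u_zero[simp]: "u_part 0 = 0" by (simp add: u_part_def)
lemma v_add[simp]: "v_part (x + y) = v_part x + v_part y" by (simp add: v_part_def vec_eq_iff)
lemma v_diff[simp]: "v_part (x - y) = v_part x - v_part y" by (simp add: v_part_def vec_eq_iff)
lemma v_scale[simp]: "v_part (c *\<^sub>R x) = c *\<^sub>R v_part x" by (simp add: v_part_def vec_eq_iff)
lemma v_zero[simp]: "v_part 0 = 0" by (simp add: v_part_def vec_eq_iff)

lemma inner_uv: "x \<bullet> y = u_part x * u_part y + v_part x \<bullet> v_part y"
  by (simp add: inner_vec_def sum_option_UNIV u_part_def v_part_def)

lemma norm_uv: "(norm x)^2 = (u_part x)^2 + (norm (v_part x))^2"
proof -
  have "(norm x)^2 = x \<bullet> x" "(norm (v_part x))^2 = v_part x \<bullet> v_part x"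
    by (simp_all add: power2_norm_eq_inner)
  then show ?thesis using inner_uv[of x x] by (simp add: power2_eq_square)
qed

lemma abs_u_le: "\<bar>u_part x\<bar> \<le> norm x"
proof -
  have "(u_part x)^2 \<le> (norm x)^2" using norm_uv[of x] by simp
  then have "\<bar>u_part x\<bar> \<le> \<bar>norm x\<bar>" using abs_le_square_iff by blast
  then show ?thesis by simp
qed

lemma norm_v_le: "norm (v_part x) \<le> norm x"
proof -
  have "(norm (v_part x))^2 \<le> (norm x)^2" using norm_uv[of x] by simp
  then show ?thesis using power2_le_imp_le by fastforce
qed

lemma vm_sum: "x v* A = (\<Sum>k\<in>UNIV. (x $ k) *\<^sub>R row k A)"
  by (simp add: vector_matrix_mult_def vec_eq_iff row_def sum_component mult.commute)




locale base_loc =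
  fixes D :: "(real^'d::finite) set" and a x0 w :: "real^'d"
    and mu kk :: real and i1 :: 'd
    and phi :: "'d \<Rightarrow> real^('d option)"
  assumes D_a: "\<And>x. x \<in> D \<Longrightarrow> mu \<le> x \<bullet> a"
    and D_sph: "D \<subseteq> sphere 0 1"
    and a_norm: "norm a = 1"
    and mu_pos: "0 < mu" and mu_le: "mu \<le> 1"
    and x0_norm: "norm x0 = 1" and x0_a: "mu \<le> x0 \<bullet> a"
    and kk_pos: "0 < kk" and kk_le: "kk \<le> 1/2"
    and ballD: "\<And>y. norm y = 1 \<Longrightarrow> dist y x0 < 2*kk \<Longrightarrow> y \<in> D"
    and w_norm: "norm w = 1" and w_a: "w \<bullet> a = 0" and w_x0: "0 \<le> w \<bullet> x0"
    and phi_P: "\<And>i. i \<noteq> i1 \<Longrightarrow> phi i \<bullet> mk (1/2) x0 = 0"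
    and phi_E: "\<And>i. i \<noteq> i1 \<Longrightarrow> phi i \<bullet> mk (-1) (kk *\<^sub>R w) = 0"
    and phi_norm: "\<And>i. i \<noteq> i1 \<Longrightarrow> norm (phi i) = 1"
    and phi_orth: "\<And>i j. i \<noteq> i1 \<Longrightarrow> j \<noteq> i1 \<Longrightarrow> i \<noteq> j \<Longrightarrow> phi i \<bullet> phi j = 0"
begin

definition "PP = mk (1/2) x0"
definition "EE = mk (-1) (kk *\<^sub>R w)"
definition "rowB k = (case k of None \<Rightarrow> PP | Some i \<Rightarrow> if i = i1 then EE else phi i)"
definition "comb (al :: 'd option \<Rightarrow> real) = (\<Sum>k\<in>UNIV. al k *\<^sub>R rowB k)"
definition "GG (al :: 'd option \<Rightarrow> real) = (\<Sum>i\<in>UNIV-{i1}. al (Some i) *\<^sub>R phi i)"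
lemma comb_decomp: "comb al = (al None *\<^sub>R PP + al (Some i1) *\<^sub>R EE) + GG al"
proof -
  have "comb al = al None *\<^sub>R PP + (\<Sum>i\<in>UNIV. al (Some i) *\<^sub>R rowB (Some i))"
    by (simp add: comb_def sum_option_UNIV rowB_def)
  also have "(\<Sum>i\<in>UNIV. al (Some i) *\<^sub>R rowB (Some i)) = al (Some i1) *\<^sub>R EE + (\<Sum>i\<in>UNIV-{i1}. al (Some i) *\<^sub>R rowB (Some i))"
    by (subst sum.remove[of UNIV i1]) (auto simp: rowB_def)
  also have "(\<Sum>i\<in>UNIV-{i1}. al (Some i) *\<^sub>R rowB (Some i)) = GG al"
    unfolding GG_def by (rule sum.cong) (auto simp: rowB_def)
  finally show ?thesis by (simp add: algebra_simps)
qed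

lemma GG_PP: "GG al \<bullet> PP = 0"
  by (simp add: GG_def inner_sum_left PP_def phi_P)
lemma GG_EE: "GG al \<bullet> EE = 0"
  by (simp add: GG_def inner_sum_left EE_def phi_E)

lemma GG_phi: assumes "i \<noteq> i1" shows "GG al \<bullet> phi i = al (Some i)"
proof -
  have "GG al \<bullet> phi i = (\<Sum>j\<in>UNIV-{i1}. al (Some j) * (phi j \<bullet> phi i))"
    by (simp add: GG_def inner_sum_left)
  also have "\<dots> = (\<Sum>j\<in>UNIV-{i1}. if j = i then al (Some i) else 0)"
  proof (rule sum.cong)
    fix j assume "j \<in> UNIV - {i1}"
    then show "al (Some j) * (phi j \<bullet> phi i) = (if j = i then al (Some i) else 0)"
      using phi_orth[of j i] phi_norm[of i] assms
      by (auto simp: inner_commute simp flip: power2_norm_eq_inner)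
  qed simp
  also have "\<dots> = al (Some i)" using assms by simp
  finally show ?thesis .
qed

lemma PP_phi: "i \<noteq> i1 \<Longrightarrow> PP \<bullet> phi i = 0"
  using phi_P by (simp add: PP_def inner_commute)
lemma EE_phi: "i \<noteq> i1 \<Longrightarrow> EE \<bullet> phi i = 0"
  using phi_E by (simp add: EE_def inner_commute)

lemma comb_phi: "i \<noteq> i1 \<Longrightarrow> comb al \<bullet> phi i = al (Some i)"
  by (simp add: comb_decomp inner_add_left PP_phi EE_phi GG_phi)

lemma comb_coef_bound: "i \<noteq> i1 \<Longrightarrow> \<bar>al (Some i)\<bar> \<le> norm (comb al)"
  using Cauchy_Schwarz_ineq2[of "comb al" "phi i"] comb_phi[of i al] phi_norm[of i] by simp

lemma pi_bound: "norm (al None *\<^sub>R PP + al (Some i1) *\<^sub>R EE) \<le> norm (comb al)"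
proof -
  have "orthogonal (al None *\<^sub>R PP + al (Some i1) *\<^sub>R EE) (GG al)"
  proof -
    have "GG al \<bullet> (al None *\<^sub>R PP + al (Some i1) *\<^sub>R EE) = 0"
      by (simp add: inner_add_right GG_PP GG_EE)
    then show ?thesis by (simp add: orthogonal_def inner_commute)
  qed
  from norm_add_Pythagorean[OF this]
  have "(norm (comb al))^2 = (norm (al None *\<^sub>R PP + al (Some i1) *\<^sub>R EE))^2 + (norm (GG al))^2"
    by (simp add: comb_decomp)
  then have "(norm (al None *\<^sub>R PP + al (Some i1) *\<^sub>R EE))^2 \<le> (norm (comb al))^2" by simp
  then show ?thesis using power2_le_imp_le by fastforce
qed

lemma pi_mk: "al None *\<^sub>R PP + al (Some i1) *\<^sub>R EE
   = mk (al None / 2 - al (Some i1)) (al None *\<^sub>R x0 + (al (Some i1) * kk) *\<^sub>R w)"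
  by (simp add: PP_def EE_def mk_def vec_eq_iff split: option.splits)


lemma det_rowB_nz: "det (\<chi> k. rowB k) \<noteq> 0"
proof -
  define Bm where "Bm = (\<chi> k. rowB k)"
  have vB: "x v* Bm = comb (\<lambda>k. x $ k)" for x
    by (simp add: vm_sum comb_def Bm_def row_def)
  have ker: "x = 0" if "x v* Bm = 0" for x
  proof -
    have c0: "comb (\<lambda>k. x $ k) = 0" using that vB by simp
    have xi: "x $ Some i = 0" if "i \<noteq> i1" for i
      using comb_phi[OF that, of "\<lambda>k. x $ k"] c0 by simp
    have "GG (\<lambda>k. x $ k) = 0" unfolding GG_def by (rule sum.neutral) (simp add: xi)
    then have eq: "mk (x$None / 2 - x$Some i1) (x$None *\<^sub>R x0 + (x$Some i1 * kk) *\<^sub>R w) = 0"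
      using c0 pi_mk[of "\<lambda>k. x $ k"] comb_decomp[of "\<lambda>k. x $ k"] by simp
    have e1: "x$None / 2 - x$Some i1 = 0" using arg_cong[OF eq, of u_part] by simp
    have e2: "x$None *\<^sub>R x0 + (x$Some i1 * kk) *\<^sub>R w = 0" using arg_cong[OF eq, of v_part] by simp
    have "(x$None *\<^sub>R x0 + (x$Some i1 * kk) *\<^sub>R w) \<bullet> a = x$None * (x0 \<bullet> a)"
      by (simp add: inner_add_left w_a)
    then have "x$None * (x0 \<bullet> a) = 0" using e2 by simp
    then have n0: "x$None = 0" using x0_a mu_pos by auto
    then have "x$Some i1 = 0" using e1 by simp
    then show "x = 0"
      unfolding vec_eq_iff
    proof (intro allI)
      fix k show "x $ k = 0 $ k"
      proof (cases k)
        case None then show ?thesis using n0 by simp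
      next
        case (Some i) then show ?thesis using xi[of i] \<open>x$Some i1 = 0\<close> by (cases "i = i1") auto
      qed
    qed
  qed
  have lin: "linear (\<lambda>x. transpose Bm *v x)" by (rule matrix_vector_mul_linear)
  have "inj (\<lambda>x. transpose Bm *v x)"
    unfolding linear_injective_0[OF lin] using ker by simp
  then have "det (matrix (\<lambda>x. transpose Bm *v x)) \<noteq> 0" using det_nz_iff_inj[OF lin] by simp
  then have "det (transpose Bm) \<noteq> 0" unfolding matrix_of_matrix_vector_mul .
  then show ?thesis unfolding det_transpose Bm_def .
qed

end

locale constr = base_loc D a x0 w mu kk i1 phi
  for D :: "(real^'d::finite) set" and a x0 w :: "real^'d"
    and mu kk :: real and i1 :: 'd
    and phi :: "'d \<Rightarrow> real^('d option)" +
  fixes ze la :: real and c :: "'d option \<Rightarrow> real"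
  assumes c_None: "c None = 1" and c_i1: "c (Some i1) = ze"
    and c_other: "\<And>i. i \<noteq> i1 \<Longrightarrow> \<bar>c (Some i)\<bar> = la"
    and ze_pos: "0 < ze" and ze_le: "ze \<le> 1/8" and la_ge: "3 \<le> la"
begin

definition "M0 = (\<chi> k. c k *\<^sub>R rowB k)"
definition "de = ze^2 * kk^2 * mu / 8"
definition "CC = 3/(mu*ze) + real CARD('d)"
definition "ka = de / (4*CC)"
definition "pj (j::nat) = (\<chi> k. if k = None then 1 else if k = Some i1 then real j else (0::real))"
lemma row_M0: "row k M0 = c k *\<^sub>R rowB k"
  by (simp add: row_def M0_def vec_eq_iff)

lemma vM0: "m v* M0 = comb (\<lambda>k. m $ k * c k)"
  by (simp add: vm_sum row_M0 comb_def)

lemma coef_bounds: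
  fixes m :: "real^('d option)"
  shows "\<And>i. i \<noteq> i1 \<Longrightarrow> \<bar>m$Some i\<bar> * la \<le> norm (m v* M0)"
    and "\<bar>m$None\<bar> * mu \<le> norm (m v* M0)"
    and "\<bar>m$Some i1\<bar> * ze * mu \<le> 2 * norm (m v* M0)"
    and "(\<Sum>k\<in>UNIV. \<bar>m$k\<bar>) \<le> CC * norm (m v* M0)"
proof -
  define al where "al = (\<lambda>k. m $ k * c k)"
  define Q where "Q = m v* M0"
  have Q: "Q = comb al" by (simp add: Q_def al_def vM0)
  show b1: "\<bar>m$Some i\<bar> * la \<le> norm (m v* M0)" if "i \<noteq> i1" for i
    using comb_coef_bound[OF that, of al] c_other[OF that] Q
    by (simp add: al_def Q_def abs_mult)
  define pv where "pv = m$None *\<^sub>R x0 + (m$Some i1 * ze * kk) *\<^sub>R w"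
  have pi: "norm (mk (m$None/2 - m$Some i1 * ze) pv) \<le> norm Q"
    using pi_bound[of al] pi_mk[of al] Q by (simp add: al_def c_None c_i1 pv_def)
  have "pv \<bullet> a = m$None * (x0 \<bullet> a)" by (simp add: pv_def inner_add_left w_a)
  moreover have "\<bar>pv \<bullet> a\<bar> \<le> norm pv" using Cauchy_Schwarz_ineq2[of pv a] a_norm by simp
  moreover have "norm pv \<le> norm Q" using norm_v_le[of "mk (m$None/2 - m$Some i1 * ze) pv"] pi by simp
  ultimately have "\<bar>m$None\<bar> * (x0 \<bullet> a) \<le> norm Q" using x0_a mu_pos by (simp add: abs_mult)
  moreover have "\<bar>m$None\<bar> * mu \<le> \<bar>m$None\<bar> * (x0 \<bullet> a)" using x0_a by (simp add: mult_left_mono)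
  ultimately show b2: "\<bar>m$None\<bar> * mu \<le> norm (m v* M0)" by (simp add: Q_def)
  have "\<bar>m$None/2 - m$Some i1 * ze\<bar> \<le> norm Q" using abs_u_le[of "mk (m$None/2 - m$Some i1 * ze) pv"] pi by simp
  then have "\<bar>m$Some i1\<bar> * ze \<le> norm Q + \<bar>m$None\<bar>/2" using ze_pos by (simp add: abs_mult)
  then have "\<bar>m$Some i1\<bar> * ze * mu \<le> (norm Q + \<bar>m$None\<bar>/2) * mu"
    using mu_pos by (simp add: mult_right_mono)
  then have "\<bar>m$Some i1\<bar> * ze * mu \<le> norm Q * mu + \<bar>m$None\<bar> * mu /2"
    by (simp add: distrib_right)
  moreover have "norm Q * mu \<le> norm Q" using mu_le by (simp add: mult_left_le)
  ultimately show b3: "\<bar>m$Some i1\<bar> * ze * mu \<le> 2 * norm (m v* M0)" using b2 norm_ge_zero[of Q] unfolding Q_def by linarith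
  have s1: "(\<Sum>k\<in>UNIV. \<bar>m$k\<bar>) = \<bar>m$None\<bar> + \<bar>m$Some i1\<bar> + (\<Sum>i\<in>UNIV-{i1}. \<bar>m$Some i\<bar>)"
    by (simp add: sum_option_UNIV sum.remove[of UNIV i1])
  have "(\<Sum>i\<in>UNIV-{i1}. \<bar>m$Some i\<bar>) \<le> (\<Sum>i\<in>UNIV-{i1}. norm Q)"
  proof (rule sum_mono)
    fix i assume "i \<in> UNIV - {i1}"
    then have "\<bar>m$Some i\<bar> * la \<le> norm Q" using b1 Q_def by simp
    moreover have "\<bar>m$Some i\<bar> \<le> \<bar>m$Some i\<bar> * la" using la_ge by (simp add: mult_le_cancel_left1 mult_left_le)
    ultimately show "\<bar>m$Some i\<bar> \<le> norm Q" by linarith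
  qed
  also have "\<dots> \<le> real CARD('d) * norm Q"
    by (simp add: card_Diff_singleton_if mult_right_mono)
  finally have s2: "(\<Sum>i\<in>UNIV-{i1}. \<bar>m$Some i\<bar>) \<le> real CARD('d) * norm Q" .
  have "\<bar>m$None\<bar> \<le> norm Q / (mu*ze)"
  proof -
    have "mu * ze \<le> mu" using ze_le ze_pos mu_pos by (simp add: mult_left_le)
    then have "\<bar>m$None\<bar> * (mu * ze) \<le> \<bar>m$None\<bar> * mu"
      by (simp add: mult_left_mono)
    then show ?thesis using b2 Q_def mu_pos ze_pos by (simp add: pos_le_divide_eq)
  qed
  moreover have "\<bar>m$Some i1\<bar> \<le> 2 * norm Q / (mu*ze)"
    using b3 Q_def mu_pos ze_pos by (simp add: pos_le_divide_eq mult.commute mult.left_commute)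
  ultimately have "(\<Sum>k\<in>UNIV. \<bar>m$k\<bar>) \<le> 3 * norm Q / (mu*ze) + real CARD('d) * norm Q"
    using s1 s2 by (simp add: add_divide_distrib)
  also have "\<dots> = CC * norm Q" by (simp add: CC_def algebra_simps)
  finally show "(\<Sum>k\<in>UNIV. \<bar>m$k\<bar>) \<le> CC * norm (m v* M0)" by (simp add: Q_def)
qed

lemma de_pos: "0 < de" using ze_pos kk_pos mu_pos by (simp add: de_def)
lemma CC_pos: "0 < CC" using ze_pos mu_pos by (simp add: CC_def add_pos_nonneg)
lemma ka_pos: "0 < ka" using de_pos CC_pos by (simp add: ka_def)
lemma ze_kk: "ze * kk \<le> 1/16"
proof -
  have "ze * kk \<le> (1/8) * (1/2)" using ze_le kk_le ze_pos kk_pos by (intro mult_mono) auto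
  then show ?thesis by simp
qed
lemma de_le: "de \<le> ze^2 * kk^2 / 8"
  using mu_le ze_pos kk_pos by (simp add: de_def mult_left_le divide_right_mono)
lemma de_small: "de \<le> ze * kk / 128"
proof -
  have "ze^2 * kk^2 = (ze*kk) * (ze*kk)" by (simp add: power2_eq_square)
  also have "\<dots> \<le> (ze*kk) * (1/16)" using ze_kk ze_pos kk_pos by (intro mult_left_mono) auto
  finally show ?thesis using de_le by simp
qed
lemma de_le1: "de \<le> 1/2048"
  using de_small ze_kk by simp

lemma perturb_gen:
  assumes M: "\<forall>k. norm (row k M - row k M0) \<le> ka"
  shows "norm (m v* M - m v* M0) \<le> ka * (\<Sum>k\<in>UNIV. \<bar>m$k\<bar>)"
proof -
  have "m v* M - m v* M0 = (\<Sum>k\<in>UNIV. m$k *\<^sub>R (row k M - row k M0))"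
    by (simp add: vm_sum scaleR_diff_right sum_subtractf)
  also have "norm \<dots> \<le> (\<Sum>k\<in>UNIV. norm (m$k *\<^sub>R (row k M - row k M0)))" by (rule norm_sum)
  also have "\<dots> \<le> (\<Sum>k\<in>UNIV. \<bar>m$k\<bar> * ka)"
    using M by (intro sum_mono) (simp add: mult_left_mono)
  finally show ?thesis by (simp add: sum_distrib_left mult.commute)
qed

lemma perturb:
  assumes M: "\<forall>k. norm (row k M - row k M0) \<le> ka" and n2: "norm (m v* M) \<le> 2"
  shows "norm (m v* M - m v* M0) \<le> de"
proof -
  define Dl where "Dl = norm (m v* M - m v* M0)"
  have a1: "Dl \<le> ka * (\<Sum>k\<in>UNIV. \<bar>m$k\<bar>)" using perturb_gen[OF M, of m] by (simp add: Dl_def)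
  have a2: "ka * (\<Sum>k\<in>UNIV. \<bar>m$k\<bar>) \<le> ka * (CC * norm (m v* M0))"
    using coef_bounds(4)[of m] ka_pos by (intro mult_left_mono) auto
  have a3: "ka * (CC * norm (m v* M0)) = de/4 * norm (m v* M0)" using CC_pos by (simp add: ka_def)
  have a4: "norm (m v* M0) \<le> 2 + Dl"
    using norm_triangle_ineq4[of "m v* M" "m v* M - m v* M0"] n2 unfolding Dl_def by (simp add: norm_minus_commute)
  have a5: "de/4 * norm (m v* M0) \<le> de/4 * (2 + Dl)" using de_pos a4 by (intro mult_left_mono) auto
  have a6: "de/4 * (2 + Dl) = de/2 + de * Dl / 4" by (simp add: algebra_simps)
  have "Dl \<le> de/2 + de * Dl / 4" using a1 a2 a3 a5 a6 by linarith
  moreover have "de * Dl \<le> Dl" using de_le1 de_pos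
    by (intro mult_left_le_one_le) (auto simp: Dl_def)
  ultimately have "Dl \<le> 2/3 * de" by linarith
  then show ?thesis using de_pos by (simp add: Dl_def)
qed

lemma pj_M0: "pj j v* M0 = mk (1/2 - ze * real j) (x0 + (ze * real j * kk) *\<^sub>R w)"
proof -
  have "GG (\<lambda>k. pj j $ k * c k) = 0"
    unfolding GG_def by (rule sum.neutral) (simp add: pj_def)
  then show ?thesis using pi_mk[of "\<lambda>k. pj j $ k * c k"]
    by (simp add: vM0 comb_decomp pj_def c_None c_i1 mult.commute mult.left_commute)
qed

lemma pj_sum: "(\<Sum>k\<in>UNIV. \<bar>pj j $ k\<bar>) = 1 + real j"
proof -
  have "(\<Sum>i\<in>UNIV. \<bar>pj j $ Some i\<bar>) = (\<Sum>i\<in>UNIV. if i = i1 then real j else 0)"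
    by (rule sum.cong) (auto simp: pj_def)
  then show ?thesis by (simp add: sum_option_UNIV pj_def)
qed

lemma pj_perturb:
  assumes M: "\<forall>k. norm (row k M - row k M0) \<le> ka" and j: "real j * ze \<le> 1/4"
  shows "norm (pj j v* M - pj j v* M0) \<le> de"
proof -
  have "1 + real j \<le> CC"
  proof -
    have "real j \<le> 1/(4*ze)" using j ze_pos by (simp add: field_simps)
    moreover have "1/(4*ze) + 1 \<le> 3/(mu*ze)"
    proof -
      have "1 \<le> 1/ze" using ze_le ze_pos by (simp add: field_simps)
      moreover have "1/ze \<le> 1/(mu*ze)" using mu_le mu_pos ze_pos by (simp add: frac_le)
      ultimately show ?thesis by (simp add: field_simps)
    qed
    ultimately show ?thesis by (simp add: CC_def)
  qed
  then have "ka * (1 + real j) \<le> ka * CC" using ka_pos by (simp add: mult_left_mono)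
  also have "\<dots> = de/4" using CC_pos by (simp add: ka_def)
  finally show ?thesis using perturb_gen[OF M, of "pj j"] pj_sum[of j] de_pos by simp
qed

definition "nv s = norm (x0 + s *\<^sub>R w)"

lemma nv_sq: "(nv s)^2 = 1 + 2 * s * (w \<bullet> x0) + s^2"
proof -
  have "(nv s)^2 = (x0 + s *\<^sub>R w) \<bullet> (x0 + s *\<^sub>R w)" by (simp add: nv_def power2_norm_eq_inner)
  also have "\<dots> = x0 \<bullet> x0 + 2 * s * (w \<bullet> x0) + s^2 * (w \<bullet> w)"
    by (simp add: inner_add_left inner_add_right inner_commute power2_eq_square algebra_simps)
  finally show ?thesis using x0_norm w_norm by (simp add: power2_norm_eq_inner[symmetric])
qed

lemma nv_mono: assumes "0 \<le> s'" "s' \<le> s" shows "nv s' \<le> nv s"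
proof -
  have "s' * (w \<bullet> x0) \<le> s * (w \<bullet> x0)" using assms w_x0 by (simp add: mult_right_mono)
  moreover have "s'^2 \<le> s^2" using assms by (simp add: power_mono)
  ultimately have "(nv s')^2 \<le> (nv s)^2" using nv_sq[of s] nv_sq[of s'] by simp
  then show ?thesis by (rule power2_le_imp_le) (simp add: nv_def)
qed

lemma nv_le: "0 \<le> s \<Longrightarrow> nv s \<le> 1 + s"
  using norm_triangle_ineq[of x0 "s *\<^sub>R w"] x0_norm w_norm by (simp add: nv_def)

lemma nv_gap: assumes "0 \<le> s'" "s' \<le> s" "s \<le> 1/2"
  shows "nv s - nv s' \<ge> (s^2 - s'^2) / 3"
proof -
  have "s' * (w \<bullet> x0) \<le> s * (w \<bullet> x0)" using assms w_x0 by (simp add: mult_right_mono)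
  then have "(nv s)^2 - (nv s')^2 \<ge> s^2 - s'^2" using nv_sq[of s] nv_sq[of s'] by linarith
  moreover have "(nv s)^2 - (nv s')^2 = (nv s - nv s') * (nv s + nv s')" by (simp add: power2_eq_square algebra_simps)
  moreover have "nv s + nv s' \<le> 3" using nv_le[of s] nv_le[of s'] assms by linarith
  moreover have "nv s - nv s' \<ge> 0" using nv_mono assms by simp
  ultimately have "s^2 - s'^2 \<le> (nv s - nv s') * 3"
    using mult_left_mono[of "nv s + nv s'" 3 "nv s - nv s'"] by linarith
  then show ?thesis by simp
qed

definition "incone v \<longleftrightarrow> (\<exists>r>0. \<exists>x\<in>D. v = r *\<^sub>R x)"

lemma cone_props: assumes "incone v" shows "mu * norm v \<le> v \<bullet> a" "0 < norm v"
proof -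
  obtain r x where r: "r > 0" "x \<in> D" "v = r *\<^sub>R x" using assms by (auto simp: incone_def)
  have nx: "norm x = 1" using D_sph r(2) by auto
  show "0 < norm v" using r nx by simp
  have "mu * r \<le> (x \<bullet> a) * r" using D_a[OF r(2)] r(1) by (simp add: mult_right_mono)
  then show "mu * norm v \<le> v \<bullet> a" using r nx by (simp add: mult.commute)
qed

lemma Ints_abs_lt1: "(x::real) \<in> \<int> \<Longrightarrow> \<bar>x\<bar> < 1 \<Longrightarrow> x = 0"
proof -
  assume "x \<in> \<int>" "\<bar>x\<bar> < 1"
  then obtain z where z: "x = of_int z" by (auto elim!: Ints_cases)
  then have "\<bar>z\<bar> < 1" using \<open>\<bar>x\<bar> < 1\<close> by linarith
  then have "z = 0" by linarith
  then show "x = 0" using z by simp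
qed

lemma de_lt_mu: "de \<le> mu / 2048"
proof -
  have "ze^2 * kk^2 = (ze*kk)^2" by (simp add: power_mult_distrib)
  also have "\<dots> \<le> (1/16)^2" using ze_kk ze_pos kk_pos by (intro power_mono) auto
  also have "(1/16::real)^2 = 1/256" by (simp add: power2_eq_square)
  finally have "ze^2 * kk^2 \<le> 1/256" .
  then have "ze^2 * kk^2 * mu \<le> 1/256 * mu" using mu_pos by (intro mult_right_mono) auto
  then show ?thesis unfolding de_def by linarith
qed

lemma de_zk: "2 * de \<le> mu * (ze * kk) / 32"
proof -
  have "2 * de = mu * (ze*kk) * (ze*kk) / 4" by (simp add: de_def power2_eq_square)
  also have "\<dots> \<le> mu * (ze*kk) * (1/16) / 4" using ze_kk ze_pos kk_pos mu_pos
    by (intro divide_right_mono mult_left_mono) auto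
  finally show ?thesis using de_pos by simp
qed

lemma gap_de: "2 * de < ze^2 * kk^2 / 3"
proof -
  have "0 < ze^2 * kk^2" using ze_pos kk_pos by simp
  then show ?thesis using de_le by linarith
qed

lemma Pj_facts:
  assumes M: "\<forall>k. norm (row k M - row k M0) \<le> ka" and jz: "real j * ze \<le> 1/4"
  shows "\<bar>u_part (pj j v* M) - (1/2 - ze * real j)\<bar> \<le> de"
    and "norm (v_part (pj j v* M) - (x0 + (ze * real j * kk) *\<^sub>R w)) \<le> de"
    and "norm (v_part (pj j v* M)) \<le> nv (ze * real j * kk) + de"
    and "nv (ze * real j * kk) - de \<le> norm (v_part (pj j v* M))"
proof -
  have d: "norm (pj j v* M - pj j v* M0) \<le> de" by (rule pj_perturb[OF M jz])
  show "\<bar>u_part (pj j v* M) - (1/2 - ze * real j)\<bar> \<le> de"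
    using abs_u_le[of "pj j v* M - pj j v* M0"] d by (simp add: pj_M0)
  show v: "norm (v_part (pj j v* M) - (x0 + (ze * real j * kk) *\<^sub>R w)) \<le> de"
    using norm_v_le[of "pj j v* M - pj j v* M0"] d by (simp add: pj_M0)
  show "norm (v_part (pj j v* M)) \<le> nv (ze * real j * kk) + de"
    using norm_triangle_ineq2[of "v_part (pj j v* M)" "x0 + (ze * real j * kk) *\<^sub>R w"] v
    by (simp add: nv_def)
  show "nv (ze * real j * kk) - de \<le> norm (v_part (pj j v* M))"
    using norm_triangle_ineq3[of "v_part (pj j v* M)" "x0 + (ze * real j * kk) *\<^sub>R w"] v
    by (simp add: nv_def norm_minus_commute)
qed

lemma nv_step:
  assumes "real (j+1) * ze \<le> 1/2" "j + 1 \<le> j'"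
  shows "nv (ze * real j * kk) + ze^2 * kk^2 / 3 \<le> nv (ze * real j' * kk)"
proof -
  define s where "s = ze * real (j+1) * kk"
  define s' where "s' = ze * real j * kk"
  have s0: "0 \<le> s'" "s' \<le> s" using ze_pos kk_pos by (auto simp: s_def s'_def mult_right_mono)
  have "s \<le> 1/2 * kk" unfolding s_def using assms(1) kk_pos by (simp add: mult_right_mono mult.commute)
  also have "\<dots> \<le> 1/2" using kk_le by simp
  finally have s1: "s \<le> 1/2" .
  have "s^2 - s'^2 = (ze*kk)^2 * (2 * real j + 1)" by (simp add: s_def s'_def power2_eq_square algebra_simps)
  also have "\<dots> \<ge> (ze*kk)^2" by (simp add: mult_le_cancel_left1)
  finally have "ze^2 * kk^2 \<le> s^2 - s'^2" by (simp add: power_mult_distrib)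
  then have "ze^2 * kk^2 / 3 \<le> (s^2 - s'^2) / 3" by (rule divide_right_mono) auto
  then have "ze^2 * kk^2 / 3 \<le> nv s - nv s'" using nv_gap[OF s0 s1] by linarith
  moreover have "nv s \<le> nv (ze * real j' * kk)"
    using assms(2) ze_pos kk_pos s0 by (intro nv_mono) (auto simp: s_def mult_right_mono)
  ultimately show ?thesis by (simp add: s'_def)
qed

lemma Lj_mono:
  assumes M: "\<forall>k. norm (row k M - row k M0) \<le> ka" and jj: "j < j'" and jz: "real j' * ze \<le> 1/4"
  shows "norm (v_part (pj j v* M)) < norm (v_part (pj j' v* M))"
proof -
  have "real j * ze \<le> real j' * ze" using jj ze_pos by (intro mult_right_mono) auto
  then have jz': "real j * ze \<le> 1/4" using jz by linarith
  have "real (j+1) * ze \<le> real j' * ze" using jj ze_pos by (intro mult_right_mono) auto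
  then have "real (j+1) * ze \<le> 1/2" using jz by linarith
  from nv_step[OF this] jj have "nv (ze * real j * kk) + ze^2 * kk^2 / 3 \<le> nv (ze * real j' * kk)" by simp
  then show ?thesis using Pj_facts(3)[OF M jz'] Pj_facts(4)[OF M jz] gap_de by linarith
qed

lemma m_zero_vm: "(0::real^('d option)) v* M = 0"
  by (simp add: vm_sum)

lemma main:
  assumes M: "\<forall>k. norm (row k M - row k M0) \<le> ka"
    and j1: "1 \<le> j" and jz: "real j * ze \<le> 1/4"
    and t1: "1/2 + (real j - 1/2)*ze \<le> t" and t2: "t \<le> 1/2 + (real j - 1/2)*ze + ze/4"
  shows "F_D D M t = norm (v_part (pj j v* M))"
proof -
  define Pj where "Pj = pj j v* M"
  define Lj where "Lj = norm (v_part Pj)"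
  note PF = Pj_facts[OF M jz, folded Pj_def]
  have dez: "de \<le> ze / 256"
  proof -
    have "ze * kk \<le> ze * (1/2)" using kk_le ze_pos by (intro mult_left_mono) auto
    then show ?thesis using de_small by linarith
  qed
  have dekk: "de \<le> kk / 256"
  proof -
    have "ze * kk \<le> (1/8) * kk" using ze_le kk_pos by (intro mult_right_mono) auto
    then show ?thesis using de_small kk_pos by linarith
  qed
  have zj: "1 * ze \<le> real j * ze" using j1 ze_pos by (intro mult_right_mono) auto
  have ex: "(real j - 1/2)*ze = real j * ze - ze/2" by (simp add: algebra_simps)
  have tpos: "0 < t" "t < 1" using t1 t2 jz ze_pos ze_le zj unfolding ex by linarith+
  have zjk: "ze * real j * kk \<le> kk/4"
  proof -
    have "ze * real j * kk \<le> 1/4 * kk" using jz kk_pos by (intro mult_right_mono) (auto simp: mult.commute)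
    then show ?thesis by simp
  qed
  have zjk0: "0 \<le> ze * real j * kk" using ze_pos kk_pos by simp
  have nvj: "nv (ze * real j * kk) \<le> 1 + kk/4"
    using nv_le[OF zjk0] zjk by linarith
  have Lj_le: "Lj \<le> 1 + kk/4 + de" using PF(3) nvj by (simp add: Lj_def)
  have Pj_lat: "Pj \<in> lattice_of M"
    unfolding lattice_of_def Pj_def by (rule CollectI, rule exI[of _ "pj j"]) (auto simp: pj_def)
  have Pj_u1: "- t < u_part Pj" using PF(1) jz dez tpos ze_le by (auto simp: abs_le_iff mult.commute)
  have Pj_u2: "u_part Pj < 1 - t" using PF(1) t2 dez ze_pos by (auto simp: abs_le_iff algebra_simps)
  have Pj_cone: "incone (v_part Pj)"
  proof -
    define v' where "v' = v_part Pj"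
    have "norm (v' - x0) \<le> norm (v' - (x0 + (ze * real j * kk) *\<^sub>R w)) + norm ((ze * real j * kk) *\<^sub>R w)"
      using norm_triangle_ineq[of "v' - (x0 + (ze * real j * kk) *\<^sub>R w)" "(ze * real j * kk) *\<^sub>R w"]
      by (simp add: algebra_simps)
    also have "\<dots> \<le> de + kk/4"
    proof -
      have "norm ((ze * real j * kk) *\<^sub>R w) = ze * real j * kk" using w_norm zjk0 by simp
      then show ?thesis using PF(2) zjk unfolding v'_def by linarith
    qed
    finally have dv: "norm (v' - x0) \<le> de + kk/4" .
    have "\<bar>norm v' - 1\<bar> \<le> norm (v' - x0)" using norm_triangle_ineq3[of v' x0] x0_norm by simp
    then have nv': "0 < norm v'" using dv dekk kk_le by linarith
    define y where "y = (1 / norm v') *\<^sub>R v'"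
    have ny: "norm y = 1" using nv' by (simp add: y_def)
    have "y - v' = (1/norm v' - 1) *\<^sub>R v'" by (simp add: y_def algebra_simps)
    also have "1/norm v' - 1 = (1 - norm v') * (1/norm v')" using nv' by (simp add: field_simps)
    finally have "y - v' = (1 - norm v') *\<^sub>R y" by (simp add: y_def)
    then have "norm (y - v') = \<bar>norm v' - 1\<bar>" using ny by simp
    then have "dist y x0 \<le> 2 * norm (v' - x0)"
      using norm_triangle_ineq[of "y - v'" "v' - x0"] \<open>\<bar>norm v' - 1\<bar> \<le> norm (v' - x0)\<close>
      by (simp add: dist_norm)
    also have "\<dots> < 2 * kk" using dv dekk kk_pos by linarith
    finally have "y \<in> D" using ballD ny by blast
    moreover have "v' = norm v' *\<^sub>R y" using nv' by (simp add: y_def)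
    ultimately show ?thesis using nv' unfolding incone_def v'_def[symmetric] by blast
  qed
  have mem: "Lj \<in> {norm (v_part w) | w. w \<in> lattice_of M \<and> - t < u_part w \<and> u_part w < 1 - t
                    \<and> (\<exists>r>0. \<exists>x\<in>D. v_part w = r *\<^sub>R x)}"
    using Pj_lat Pj_u1 Pj_u2 Pj_cone unfolding Lj_def incone_def by blast
  have lb: "Lj \<le> norm (v_part Q')" if Q'lat: "Q' \<in> lattice_of M" and w1: "- t < u_part Q'" and w2: "u_part Q' < 1 - t"
     and Q'cone: "incone (v_part Q')" for Q'
  proof (rule ccontr)
    assume "\<not> Lj \<le> norm (v_part Q')"
    then have lt: "norm (v_part Q') < Lj" by simp
    obtain m where mZ: "\<forall>i. m $ i \<in> \<int>" and Q'm: "Q' = m v* M"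
      using Q'lat by (auto simp: lattice_of_def)
    have cp: "mu * norm (v_part Q') \<le> v_part Q' \<bullet> a" "0 < norm (v_part Q')"
      using cone_props[OF Q'cone] by auto
    have uQ'1: "\<bar>u_part Q'\<bar> < 1" using w1 w2 tpos by auto
    have vQ'b: "norm (v_part Q') \<le> 6/5" using lt Lj_le kk_le dekk by linarith
    have "(norm Q')^2 \<le> 1 + (6/5)^2"
    proof -
      have "(u_part Q')^2 \<le> 1" using uQ'1 by (simp add: abs_square_le_1)
      moreover have "(norm (v_part Q'))^2 \<le> (6/5)^2" using vQ'b by (intro power_mono) auto
      ultimately show ?thesis using norm_uv[of Q'] by linarith
    qed
    moreover have "(1::real) + (6/5)^2 \<le> 2^2" by (simp add: power2_eq_square)
    ultimately have "(norm Q')^2 \<le> 2^2" by linarith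
    then have nQ': "norm Q' \<le> 2" by (rule power2_le_imp_le) auto
    define Q where "Q = m v* M0"
    have dQ: "norm (Q' - Q) \<le> de" using perturb[OF M, of m] nQ' by (simp add: Q'm Q_def)
    have nQ: "norm Q \<le> 2 + de" using dQ norm_triangle_ineq3[of Q Q'] nQ' by (simp add: norm_minus_commute)
    have mi0: "m $ Some i = 0" if "i \<noteq> i1" for i
    proof -
      have "\<bar>m $ Some i\<bar> * la \<le> 2 + de" using coef_bounds(1)[OF that, of m] nQ by (simp add: Q_def)
      then have "\<bar>m $ Some i\<bar> * la < 1 * la" using la_ge de_le1 by linarith
      then have "\<bar>m $ Some i\<bar> < 1" using la_ge by (simp add: mult_less_cancel_right)
      then show ?thesis using mZ Ints_abs_lt1 by blast
    qed
    define al where "al = (\<lambda>k. m $ k * c k)"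
    have GG0: "GG al = 0" unfolding GG_def by (rule sum.neutral) (simp add: al_def mi0)
    define uQ where "uQ = m$None / 2 - m$Some i1 * ze"
    define vQ where "vQ = m$None *\<^sub>R x0 + (m$Some i1 * ze * kk) *\<^sub>R w"
    have Qmk: "Q = mk uQ vQ"
      using pi_mk[of al] GG0 unfolding Q_def vM0 comb_decomp al_def
      by (simp add: c_None c_i1 uQ_def vQ_def)
    have du: "\<bar>u_part Q' - uQ\<bar> \<le> de" using abs_u_le[of "Q' - Q"] dQ Qmk by simp
    have dv: "norm (v_part Q' - vQ) \<le> de" using norm_v_le[of "Q' - Q"] dQ Qmk by simp
    have da: "\<bar>v_part Q' \<bullet> a - vQ \<bullet> a\<bar> \<le> de"
      using Cauchy_Schwarz_ineq2[of "v_part Q' - vQ" a] a_norm dv by (simp add: inner_diff_left)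
    have vQa: "vQ \<bullet> a = m$None * (x0 \<bullet> a)" by (simp add: vQ_def inner_add_left w_a)
    have nvQ: "norm (v_part Q') \<ge> norm vQ - de" using dv norm_triangle_ineq3[of vQ "v_part Q'"]
      by (simp add: norm_minus_commute)
    obtain z where z: "m$None = of_int z" using mZ[rule_format, of None] by (auto elim: Ints_cases)
    obtain y where y: "m$Some i1 = of_int y" using mZ[rule_format, of "Some i1"] by (auto elim: Ints_cases)
    have "z \<le> -1 \<or> z = 0 \<or> z = 1 \<or> z \<ge> 2" by linarith
    then show False
    proof (elim disjE)
      assume "z \<le> -1"
      then have "m$None \<le> -1" using z by simp
      then have "m$None * (x0 \<bullet> a) \<le> -1 * (x0 \<bullet> a)" using x0_a mu_pos by (intro mult_right_mono) auto
      then have "vQ \<bullet> a \<le> - mu" using vQa x0_a by linarith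
      then have "v_part Q' \<bullet> a < 0" using da de_lt_mu mu_pos by linarith
      moreover have "0 \<le> mu * norm (v_part Q')" using mu_pos by simp
      ultimately show False using cp by linarith
    next
      assume z0: "z = 0"
      then have "vQ \<bullet> a = 0" using vQa z by simp
      then have up: "mu * norm (v_part Q') \<le> de" using da cp by linarith
      show False
      proof (cases "y = 0")
        case True
        have "m = 0"
        proof (subst vec_eq_iff, rule allI)
          fix k show "m $ k = 0 $ k"
          proof (cases k)
            case None then show ?thesis using z0 z by simp
          next
            case (Some i) then show ?thesis using mi0[of i] y True by (cases "i = i1") auto
          qed
        qed
        then have "Q' = 0" using Q'm m_zero_vm by simp
        then show False using cp by simp
      next
        case False
        then have "1 \<le> \<bar>m$Some i1\<bar>" using y by linarith
        then have "ze * kk \<le> \<bar>m$Some i1\<bar> * ze * kk" using ze_pos kk_pos by simp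
        also have "\<dots> = norm vQ" using z0 z w_norm ze_pos kk_pos by (simp add: vQ_def abs_mult)
        finally have "ze * kk - de \<le> norm (v_part Q')" using nvQ by linarith
        then have "mu * (ze * kk - de) \<le> mu * norm (v_part Q')" using mu_pos by (intro mult_left_mono) auto
        then have "mu * (ze * kk) \<le> de + mu * de" using up by (simp add: algebra_simps)
        moreover have "mu * de \<le> de" using mu_le de_pos by (simp add: mult_left_le_one_le)
        moreover have "0 < mu * (ze * kk)" using mu_pos ze_pos kk_pos by simp
        ultimately show False using de_zk by linarith
      qed
    next
      assume z2: "z \<ge> 2"
      have "uQ < 1 + de" using du uQ'1 by linarith
      then have "m$Some i1 * ze > m$None/2 - 1 - de" by (simp add: uQ_def)
      moreover have "m$None/2 - 1 \<ge> 0" using z z2 by simp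
      ultimately have "m$Some i1 * ze > - ze" using dez ze_pos by linarith
      then have hh: "(-1) * ze < m$Some i1 * ze" by simp
      have "m$Some i1 > -1" using mult_right_less_imp_less[OF hh] ze_pos by simp
      then have "real_of_int (-1) < real_of_int y" using y by simp
      then have "-1 < y" by (simp only: of_int_less_iff)
      then have y0: "m$Some i1 \<ge> 0" using y by simp
      have "vQ \<bullet> x0 = m$None + m$Some i1 * ze * kk * (w \<bullet> x0)"
        using x0_norm by (simp add: vQ_def inner_add_left power2_norm_eq_inner[symmetric])
      moreover have "m$Some i1 * ze * kk * (w \<bullet> x0) \<ge> 0" using y0 ze_pos kk_pos w_x0 by simp
      ultimately have "vQ \<bullet> x0 \<ge> 2" using z z2 by simp
      moreover have "vQ \<bullet> x0 \<le> norm vQ" using norm_cauchy_schwarz[of vQ x0] x0_norm by simp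
      ultimately have "norm (v_part Q') \<ge> 2 - de" using nvQ by linarith
      then show False using vQ'b de_le1 by linarith
    next
      assume z1: "z = 1"
      have "uQ < 1 - t + de" using du w2 by linarith
      then have "1/2 - m$Some i1 * ze < 1/2 - (real j - 1/2)*ze + de" using t1 z z1 by (simp add: uQ_def)
      then have "(real j - 1/2 - m$Some i1) * ze < de" by (simp add: algebra_simps)
      also have "\<dots> < (1/2) * ze" using dez ze_pos by simp
      finally have hh: "(real j - 1/2 - m$Some i1) * ze < 1/2 * ze" .
      have "real j - 1/2 - m$Some i1 < 1/2" using mult_right_less_imp_less[OF hh] ze_pos by simp
      then have "y \<ge> int j" using y by linarith
      then show False
      proof (cases "y = int j")
        case True
        have "m = pj j"
        proof (subst vec_eq_iff, rule allI)
          fix k show "m $ k = pj j $ k"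
          proof (cases k)
            case None then show ?thesis using z1 z by (simp add: pj_def)
          next
            case (Some i) then show ?thesis using mi0[of i] y True by (cases "i = i1") (auto simp: pj_def)
          qed
        qed
        then have "Q' = Pj" by (simp add: Q'm Pj_def)
        then show False using lt by (simp add: Lj_def)
      next
        case False
        then have yj: "y \<ge> int j + 1" using \<open>y \<ge> int j\<close> by linarith
        then have jj: "j + 1 \<le> nat y" by linarith
        have "real (j+1) * ze \<le> 1/2" using jz ze_le by (simp add: algebra_simps)
        from nv_step[OF this jj]
        have "nv (ze * real j * kk) + ze^2 * kk^2 / 3 \<le> nv (ze * real (nat y) * kk)" .
        moreover have "real (nat y) = m$Some i1" using y yj by simp
        moreover have "norm vQ = nv (m$Some i1 * ze * kk)" using z z1 by (simp add: vQ_def nv_def)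
        ultimately have "nv (ze * real j * kk) + ze^2 * kk^2 / 3 \<le> norm vQ"
          by (simp add: mult.commute mult.left_commute)
        then show False using nvQ PF(3) lt gap_de unfolding Lj_def by linarith
      qed
    qed
  qed
  show ?thesis unfolding F_D_def
    by (rule cInf_eq_minimum[OF mem[unfolded Lj_def Pj_def]])
       (use lb in \<open>auto simp: Pj_def Lj_def incone_def\<close>)
qed

lemma count:
  assumes M: "\<forall>k. norm (row k M - row k M0) \<le> ka"
    and N: "4 / ze \<le> real N + 1/2"
  shows "real (nat \<lfloor>1/(4*ze)\<rfloor>) \<le> real (G_DN D N M)"
proof -
  define J where "J = nat \<lfloor>1/(4*ze)\<rfloor>"
  define K where "K = real N + 1/2"
  have Kpos: "0 < K" by (simp add: K_def)
  have "32 \<le> 4/ze" using ze_pos ze_le by (simp add: field_simps)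
  then have K2: "32 \<le> K" using N unfolding K_def by linarith
  have iK: "1/K \<le> ze/4" using N ze_pos Kpos unfolding K_def by (simp add: field_simps)
  define T where "T j = 1/2 + (real j - 1/2)*ze" for j :: nat
  define nn where "nn j = nat \<lceil>T j * K\<rceil>" for j
  define L where "L j = norm (v_part (pj j v* M))" for j
  define S where "S = {F_D D M (real n / (real N + 1/2)) | n. 1 \<le> n \<and> n \<le> N}"
  have jz: "real j * ze \<le> 1/4" if "j \<in> {1..J}" for j
  proof -
    have "real j \<le> real (nat \<lfloor>1/(4*ze)\<rfloor>)" using that unfolding J_def by simp
    also have "\<dots> = of_int \<lfloor>1/(4*ze)\<rfloor>" using ze_pos by simp
    also have "\<dots> \<le> 1/(4*ze)" by (rule of_int_floor_le)
    finally have "real j \<le> 1/(4*ze)" .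
    then show ?thesis using ze_pos by (simp add: field_simps)
  qed
  have key: "L j \<in> S" if j: "j \<in> {1..J}" for j
  proof -
    have jz': "real j * ze \<le> 1/4" using jz[OF j] .
    have j1: "1 \<le> j" using j by simp
    have "0 \<le> (real j - 1/2) * ze" using j1 ze_pos by simp
    then have Tpos: "0 < T j" unfolding T_def by linarith
    have Tle: "T j \<le> 3/4" using jz' ze_pos unfolding T_def by (simp add: algebra_simps)
    have c1: "T j * K \<le> of_int \<lceil>T j * K\<rceil>" by simp
    have c2: "of_int \<lceil>T j * K\<rceil> < T j * K + 1" by linarith
    have cpos: "0 < \<lceil>T j * K\<rceil>" using Tpos Kpos by simp
    have nnr: "real (nn j) = of_int \<lceil>T j * K\<rceil>" using cpos by (simp add: nn_def)
    have tj1: "T j \<le> real (nn j) / K" using c1 nnr Kpos by (simp add: field_simps)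
    have "real (nn j) / K < T j + 1/K" using c2 nnr Kpos by (simp add: field_simps)
    then have tj2: "real (nn j) / K \<le> T j + ze/4" using iK by linarith
    have "1 \<le> \<lceil>T j * K\<rceil>" using cpos by linarith
    from nat_mono[OF this] have n1: "1 \<le> nn j" by (simp add: nn_def)
    have "T j * K \<le> 3/4 * K" using Tle Kpos by (intro mult_right_mono) auto
    moreover have "3/4 * K = 3/4 * real N + 3/8" by (simp add: K_def)
    ultimately have "real (nn j) < real N + 1" using c2 nnr K2 unfolding K_def by linarith
    then have n2: "nn j \<le> N" by simp
    have "F_D D M (real (nn j) / K) = L j"
      unfolding L_def by (rule main[OF M j1 jz']) (use tj1 tj2 in \<open>auto simp: T_def\<close>)
    then have "L j = F_D D M (real (nn j) / (real N + 1 / 2))" by (simp add: K_def)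
    then show ?thesis unfolding S_def using n1 n2 by blast
  qed
  have inj: "inj_on L {1..J}"
  proof (rule linorder_inj_onI)
    fix x y assume "x < y" "x \<in> {1..J}" "y \<in> {1..J}"
    then show "L x \<noteq> L y" using Lj_mono[OF M \<open>x < y\<close> jz] unfolding L_def by force
  qed auto
  have fin: "finite S"
  proof -
    have "S = (\<lambda>n. F_D D M (real n / (real N + 1/2))) ` {1..N}" by (auto simp: S_def)
    then show ?thesis by simp
  qed
  have "card (L ` {1..J}) \<le> card S" using key fin by (intro card_mono) auto
  then have "J \<le> card S" using card_image[OF inj] by simp
  then show ?thesis by (simp add: J_def S_def G_DN_def)
qed

end



lemma det_Ints: "(\<forall>i j. (A::real^'n::finite^'n) $ i $ j \<in> \<int>) \<Longrightarrow> det A \<in> \<int>"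
  unfolding det_def by (intro Ints_sum Ints_mult Ints_prod) auto

lemma SLZ_mult: "A \<in> SLZ \<Longrightarrow> B \<in> SLZ \<Longrightarrow> A ** B \<in> SLZ"
proof -
  assume "A \<in> SLZ" "B \<in> SLZ"
  then have "det (A ** B) = 1" "\<forall>i j. (A ** B) $ i $ j \<in> \<int>"
    unfolding SLZ_def by (auto simp: det_mul simp del: det_mul[symmetric], auto simp: matrix_matrix_mult_def intro!: Ints_sum Ints_mult)
  then show ?thesis by (simp add: SLZ_def)
qed

lemma SLZ_inv:
  assumes "(A::real^'n::finite^'n) \<in> SLZ"
  shows "\<exists>B\<in>SLZ. B ** A = mat 1 \<and> A ** B = mat 1"
proof -
  have dA: "det A = 1" using assms by (simp add: SLZ_def)
  have AZ: "\<forall>i j. A $ i $ j \<in> \<int>" using assms by (simp add: SLZ_def)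
  obtain B where B: "A ** B = mat 1" "B ** A = mat 1"
    using invertible_det_nz[of A] dA unfolding invertible_def by auto
  have dB: "det B = 1" using det_mul[of A B] B(1) dA by simp
  have BZ: "B $ k $ j \<in> \<int>" for k j
  proof -
    define x where "x = (\<chi> l. B $ l $ j)"
    define b where "b = (\<chi> i. (mat 1 :: real^'n^'n) $ i $ j)"
    have "A *v x = b"
      using B(1) by (simp add: x_def b_def matrix_vector_mult_def matrix_matrix_mult_def vec_eq_iff)
    then have "x = (\<chi> k. det(\<chi> i l. if l=k then b$i else A$i$l) / det A)"
      using cramer[of A x b] dA by simp
    then have "B $ k $ j = det(\<chi> i l. if l=k then b$i else A$i$l)"
      using dA by (simp add: x_def vec_eq_iff)
    also have "\<dots> \<in> \<int>" using AZ by (intro det_Ints) (auto simp: b_def mat_def)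
    finally show ?thesis .
  qed
  show ?thesis using B dB BZ by (auto simp: SLZ_def)
qed

lemma lattice_SLZ:
  assumes "\<gamma> \<in> SLZ"
  shows "lattice_of (\<gamma> ** M) = lattice_of M"
proof -
  obtain \<gamma>' where g': "\<gamma>' \<in> SLZ" "\<gamma>' ** \<gamma> = mat 1" using SLZ_inv[OF assms] by auto
  have intv: "\<forall>i. (m v* g) $ i \<in> \<int>" if "\<forall>i. m $ i \<in> \<int>" "g \<in> SLZ" for m g
    using that by (auto simp: SLZ_def vector_matrix_mult_def intro!: Ints_sum Ints_mult)
  show ?thesis
  proof
    show "lattice_of (\<gamma> ** M) \<subseteq> lattice_of M"
    proof
      fix x assume "x \<in> lattice_of (\<gamma> ** M)"
      then obtain m where m: "\<forall>i. m $ i \<in> \<int>" "x = m v* (\<gamma> ** M)" by (auto simp: lattice_of_def)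
      then have "x = (m v* \<gamma>) v* M" by (simp add: vector_matrix_mul_assoc)
      then show "x \<in> lattice_of M" using intv[OF m(1) assms] by (auto simp: lattice_of_def)
    qed
    show "lattice_of M \<subseteq> lattice_of (\<gamma> ** M)"
    proof
      fix x assume "x \<in> lattice_of M"
      then obtain m where m: "\<forall>i. m $ i \<in> \<int>" "x = m v* M" by (auto simp: lattice_of_def)
      have "(m v* \<gamma>') v* (\<gamma> ** M) = m v* M"
        by (simp add: vector_matrix_mul_assoc matrix_mul_assoc g'(2))
      then show "x \<in> lattice_of (\<gamma> ** M)" using intv[OF m(1) g'(1)] m(2)
        unfolding lattice_of_def by (intro CollectI exI[of _ "m v* \<gamma>'"]) auto
    qed
  qed
qed

lemma G_DN_SLZ: "\<gamma> \<in> SLZ \<Longrightarrow> G_DN D N (\<gamma> ** M) = G_DN D N M"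
  by (simp add: G_DN_def F_D_def lattice_SLZ)

lemma cont_row_mult: "continuous_on UNIV (\<lambda>M::real^'n::finite^'n. norm (row k (\<gamma> ** M) - R))"
  unfolding row_def matrix_matrix_mult_def
  by (intro continuous_intros)

lemma open_U:
  "openin (top_of_set SLR) {M \<in> SLR. \<exists>\<gamma>\<in>SLZ. \<forall>k. norm (row k (\<gamma> ** M) - row k (M0::real^'n::finite^'n)) < (ka::real)}"
proof -
  have "{M \<in> SLR. \<exists>\<gamma>\<in>SLZ. \<forall>k. norm (row k (\<gamma> ** M) - row k M0) < ka}
     = SLR \<inter> (\<Union>\<gamma>\<in>SLZ. \<Inter>k. {M. norm (row k (\<gamma> ** M) - row k M0) < ka})" by auto
  moreover have "open (\<Union>\<gamma>\<in>SLZ. \<Inter>k. {M. norm (row k (\<gamma> ** M) - row k M0) < ka})"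
    by (intro open_UN ballI open_INT) (auto intro!: open_Collect_less cont_row_mult continuous_on_const)
  ultimately show ?thesis by (simp add: openin_open_Int)
qed




lemma card_opt: "CARD('d::finite option) = CARD('d) + 1"
proof -
  have "card (range (Some :: 'd \<Rightarrow> 'd option)) = CARD('d)" by (simp add: card_image)
  then show ?thesis by (simp add: UNIV_option_conv)
qed

lemma dim_orth_compl:
  fixes A :: "'a::euclidean_space set"
  shows "dim {y. \<forall>x\<in>span A. orthogonal x y} + dim A = DIM('a)"
proof -
  have "dim {y \<in> UNIV. \<forall>x\<in>span A. orthogonal x y} + dim (span A) = dim (UNIV::'a set)"
    by (rule dim_subspace_orthogonal_to_vectors) (auto simp: subspace_span)
  then show ?thesis by simp
qed

lemma exists_w:
  fixes a x0 :: "real^'d::finite"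
  assumes "CARD('d) \<ge> 2" "a \<noteq> 0"
  shows "\<exists>w. norm w = 1 \<and> w \<bullet> a = 0 \<and> 0 \<le> w \<bullet> x0"
proof -
  define W where "W = {y. \<forall>x\<in>span {a}. orthogonal x y}"
  have sW: "subspace W" unfolding W_def by (rule subspace_orthogonal_to_vectors)
  have "dim W + 1 = CARD('d)" using dim_orth_compl[of "{a}"] assms(2) by (simp add: W_def)
  then have dW: "dim W \<ge> 1" using assms(1) by linarith
  obtain B where B: "B \<subseteq> W" "\<And>x. x \<in> B \<Longrightarrow> norm x = 1" "card B = dim W"
    using orthonormal_basis_subspace[OF sW] by metis
  have "card B \<ge> 1" using B(3) dW by simp
  then have "B \<noteq> {}" by (metis card.empty not_one_le_zero)
  then obtain w1 where w1: "w1 \<in> B" by auto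
  have n1: "norm w1 = 1" using B(2) w1 by simp
  have "orthogonal a w1" using B(1) w1 by (auto simp: W_def span_base)
  then have o1: "w1 \<bullet> a = 0" by (simp add: orthogonal_def inner_commute)
  show ?thesis
  proof (cases "0 \<le> w1 \<bullet> x0")
    case True then show ?thesis using n1 o1 by blast
  next
    case False then show ?thesis using n1 o1 by (intro exI[of _ "- w1"]) auto
  qed
qed

lemma exists_phi:
  fixes P E :: "real^('d::finite option)" and ii :: 'd
  assumes "P \<notin> span {E}" "E \<noteq> 0"
  obtains h where "\<And>i. i \<noteq> ii \<Longrightarrow> h i \<bullet> P = 0" "\<And>i. i \<noteq> ii \<Longrightarrow> h i \<bullet> E = 0"
    "\<And>i. i \<noteq> ii \<Longrightarrow> norm (h i) = 1"
    "\<And>i j. i \<noteq> ii \<Longrightarrow> j \<noteq> ii \<Longrightarrow> i \<noteq> j \<Longrightarrow> h i \<bullet> h j = 0"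
proof -
  define S where "S = {y. \<forall>x\<in>span {P, E}. orthogonal x y}"
  have sS: "subspace S" unfolding S_def by (rule subspace_orthogonal_to_vectors)
  have d2: "dim {P, E} = 2" using assms by (simp add: dim_insert)
  have "dim S + 2 = CARD('d) + 1" using dim_orth_compl[of "{P, E}"] d2 card_opt by (simp add: S_def)
  then have dS: "dim S = card (UNIV - {ii})" by (simp add: card_Diff_singleton_if)
  obtain B where B: "B \<subseteq> S" "pairwise orthogonal B" "\<And>x. x \<in> B \<Longrightarrow> norm x = 1" "card B = dim S"
    "independent B"
    using orthonormal_basis_subspace[OF sS] by metis
  have fB: "finite B" using B(5) by (rule independent_imp_finite)
  obtain h where h: "bij_betw h (UNIV - {ii}) B"
    using finite_same_card_bij[of "UNIV - {ii}" B] fB B(4) dS by auto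
  have hB: "h i \<in> B" if "i \<noteq> ii" for i using h that by (auto simp: bij_betw_def)
  show ?thesis
  proof (rule that)
    fix i assume i: "i \<noteq> ii"
    have "h i \<in> S" using hB[OF i] B(1) by auto
    then have "orthogonal P (h i)" "orthogonal E (h i)" by (auto simp: S_def span_base)
    then show "h i \<bullet> P = 0" by (auto simp: orthogonal_def inner_commute)
  next
    fix i assume i: "i \<noteq> ii"
    have "h i \<in> S" using hB[OF i] B(1) by auto
    then have "orthogonal E (h i)" by (auto simp: S_def span_base)
    then show "h i \<bullet> E = 0" by (auto simp: orthogonal_def inner_commute)
  next
    fix i assume i: "i \<noteq> ii"
    show "norm (h i) = 1" using B(3) hB[OF i] by simp
  next
    fix i j assume ij: "i \<noteq> ii" "j \<noteq> ii" "i \<noteq> j"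
    have "h i \<noteq> h j" using h ij by (auto simp: bij_betw_def inj_on_def)
    then show "h i \<bullet> h j = 0" using B(2) hB ij by (auto simp: pairwise_def orthogonal_def)
  qed
qed




lemma (in constr) det_M0: "det M0 = prod c UNIV * det (\<chi> k. rowB k)"
proof -
  define dg where "dg = (\<chi> i j. if i = j then c i else (0::real))"
  have "M0 = dg ** (\<chi> k. rowB k)"
  proof -
    have "(dg ** (\<chi> k. rowB k)) $ k $ j = c k * rowB k $ j" for k j
    proof -
      have "(dg ** (\<chi> k. rowB k)) $ k $ j = (\<Sum>l\<in>UNIV. (if k = l then c k else 0) * rowB l $ j)"
        by (simp add: matrix_matrix_mult_def dg_def)
      also have "\<dots> = (\<Sum>l\<in>UNIV. if l = k then c k * rowB k $ j else 0)" by (rule sum.cong) auto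
      also have "\<dots> = c k * rowB k $ j" by simp
      finally show ?thesis .
    qed
    then show ?thesis by (simp add: M0_def vec_eq_iff)
  qed
  moreover have "det dg = prod c UNIV" by (subst det_diagonal) (auto simp: dg_def)
  ultimately show ?thesis by (simp add: det_mul)
qed

theorem proposition7p5:
  fixes D :: "(real^'d::finite) set" and a :: "real^'d"
  assumes "CARD('d) \<ge> 2"
    and "a \<in> sphere 0 1"
    and "D \<subseteq> sphere 0 1"
    and "\<exists>V. openin (top_of_set (sphere (0::real^'d) 1)) V \<and> V \<noteq> {} \<and> V \<subseteq> D"
    and "closure D \<subseteq> open_hemisphere a"
  shows "\<exists>c>0. \<forall>\<epsilon>>0. \<exists>(U :: (real^('d option)^('d option)) set) (N\<^sub>\<epsilon> :: nat).
           U \<noteq> {} \<and> U \<subseteq> SLR \<and> openin (top_of_set SLR) U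
           \<and> (\<forall>\<gamma>\<in>SLZ. \<forall>M\<in>U. \<gamma> ** M \<in> U)
           \<and> (\<forall>M\<in>U. \<forall>N\<ge>N\<^sub>\<epsilon>. real (G_DN D N M) \<ge> c / \<epsilon>)"
proof -
  have a_norm: "norm a = 1" using assms(2) by simp
  obtain V where V: "openin (top_of_set (sphere (0::real^'d) 1)) V" "V \<noteq> {}" "V \<subseteq> D"
    using assms(4) by blast
  obtain x0 where x0V: "x0 \<in> V" using V(2) by auto
  obtain rr where rr: "rr > 0" "\<And>x'. x' \<in> sphere 0 1 \<Longrightarrow> dist x' x0 < rr \<Longrightarrow> x' \<in> V"
    using V(1) x0V unfolding openin_euclidean_subtopology_iff by blast
  have x0D: "x0 \<in> D" using x0V V(3) by auto
  have x0n: "norm x0 = 1" using x0D assms(3) by auto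
  have cD: "compact (closure D)"
    using assms(3) bounded_subset[OF bounded_sphere] by (simp add: compact_closure)
  have neD: "closure D \<noteq> {}" using x0D closure_subset by auto
  have "continuous_on (closure D) (\<lambda>y. a \<bullet> y)" by (intro continuous_intros)
  then obtain xm where xm: "xm \<in> closure D" "\<And>y. y \<in> closure D \<Longrightarrow> a \<bullet> xm \<le> a \<bullet> y"
    using continuous_attains_inf[OF cD neD] by blast
  define mu where "mu = a \<bullet> xm"
  have mu_pos: "0 < mu" using xm(1) assms(5) by (auto simp: mu_def open_hemisphere_def)
  have D_a: "mu \<le> x \<bullet> a" if "x \<in> D" for x
    using xm(2)[of x] that closure_subset by (auto simp: mu_def inner_commute)
  have x0_a: "mu \<le> x0 \<bullet> a" using D_a[OF x0D] .
  have "x0 \<bullet> a \<le> 1" using norm_cauchy_schwarz[of x0 a] x0n a_norm by simp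
  then have mu_le: "mu \<le> 1" using x0_a by linarith
  define kk where "kk = min rr 1 / 2"
  have kk_pos: "0 < kk" and kk_le: "kk \<le> 1/2" using rr(1) by (auto simp: kk_def)
  have ballD: "y \<in> D" if "norm y = 1" "dist y x0 < 2*kk" for y
  proof -
    have "2*kk \<le> rr" by (simp add: kk_def)
    then show ?thesis using rr(2)[of y] that V(3) by auto
  qed
  obtain i1 :: 'd where True by blast
  have "card (UNIV - {i1}) \<ge> 1" using assms(1) by (simp add: card_Diff_singleton_if)
  then have "UNIV - {i1} \<noteq> {}" by (metis card.empty not_one_le_zero)
  then obtain i2 where i2: "i2 \<noteq> i1" by blast
  have a0: "a \<noteq> 0" using a_norm by auto
  obtain w where w: "norm w = 1" "w \<bullet> a = 0" "0 \<le> w \<bullet> x0"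
    using exists_w[OF assms(1) a0, of x0] by blast
  have E0: "mk (-1) (kk *\<^sub>R w) \<noteq> 0"
  proof
    assume "mk (-1) (kk *\<^sub>R w) = 0"
    then have "u_part (mk (-1) (kk *\<^sub>R w)) = u_part 0" by simp
    then show False by simp
  qed
  have PnE: "mk (1/2) x0 \<notin> span {mk (-1) (kk *\<^sub>R w)}"
  proof
    assume "mk (1/2) x0 \<in> span {mk (-1) (kk *\<^sub>R w)}"
    then obtain r where r: "mk (1/2) x0 = r *\<^sub>R mk (-1) (kk *\<^sub>R w)" by (auto simp: span_singleton)
    have "x0 = (r * kk) *\<^sub>R w" using arg_cong[OF r, of v_part] by simp
    then have "x0 \<bullet> a = 0" using w(2) by simp
    then show False using x0_a mu_pos by simp
  qed
  obtain h where hP: "\<And>i. i \<noteq> i1 \<Longrightarrow> h i \<bullet> mk (1/2) x0 = 0"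
    and hE: "\<And>i. i \<noteq> i1 \<Longrightarrow> h i \<bullet> mk (-1) (kk *\<^sub>R w) = 0"
    and hN: "\<And>i. i \<noteq> i1 \<Longrightarrow> norm (h i) = 1"
    and hO: "\<And>i j. i \<noteq> i1 \<Longrightarrow> j \<noteq> i1 \<Longrightarrow> i \<noteq> j \<Longrightarrow> h i \<bullet> h j = 0"
    using exists_phi[OF PnE E0, where ii=i1] by blast
  have ballD': "\<And>y. norm y = 1 \<Longrightarrow> dist y x0 < 2*kk \<Longrightarrow> y \<in> D" using ballD by blast
  have D_a': "\<And>x. x \<in> D \<Longrightarrow> mu \<le> x \<bullet> a" using D_a by blast
  interpret base: base_loc D a x0 w mu kk i1 h
    by unfold_locales (fact D_a' assms(3) a_norm mu_pos mu_le x0n x0_a kk_pos kk_le ballD' w(1) w(2) w(3) hP hE hN hO)+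
  define be where "be = det (\<chi> k. base.rowB k)"
  have be0: "be \<noteq> 0" using base.det_rowB_nz by (simp add: be_def)
  define dd where "dd = CARD('d) - 1"
  have dd1: "1 \<le> dd" using assms(1) by (simp add: dd_def)
  show ?thesis
  proof (intro exI[of _ "1::real"] conjI allI impI)
    fix ep :: real assume ep: "ep > 0"
    define ze0 where "ze0 = min (1/8) (ep/8)"
    have ze0p: "0 < ze0" using ep by (simp add: ze0_def)
    define la where "la = max 3 (1 / (ze0 * \<bar>be\<bar>))"
    have la3: "3 \<le> la" by (simp add: la_def)
    define ze where "ze = 1 / (la ^ dd * \<bar>be\<bar>)"
    have lapos: "0 < la ^ dd" using la3 by simp
    have ze_pos: "0 < ze" using lapos be0 by (simp add: ze_def)
    have "la \<le> la ^ dd" using la3 dd1 by (intro self_le_power) auto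
    moreover have "1 / (ze0 * \<bar>be\<bar>) \<le> la" by (simp add: la_def)
    ultimately have "1 / (ze0 * \<bar>be\<bar>) \<le> la ^ dd" by linarith
    then have "ze \<le> ze0" using ze0p be0 lapos unfolding ze_def by (simp add: field_simps)
    then have ze_le: "ze \<le> 1/8" and ze_ep: "ze \<le> ep/8" by (auto simp: ze0_def)
    define c where "c k = (case k of None \<Rightarrow> 1 | Some i \<Rightarrow> if i = i1 then ze else if i = i2 then la * sgn be else la)" for k
    have cN: "c None = 1" by (simp add: c_def)
    have c1: "c (Some i1) = ze" by (simp add: c_def)
    have cO: "\<And>i. i \<noteq> i1 \<Longrightarrow> \<bar>c (Some i)\<bar> = la"
      using la3 be0 by (simp add: c_def abs_mult abs_sgn_eq)
    interpret cs: constr D a x0 w mu kk i1 h ze la c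
      by unfold_locales (fact cN c1 cO ze_pos ze_le la3)+
    have pc: "prod c UNIV = ze * sgn be * la ^ dd"
    proof -
      have "prod c UNIV = (\<Prod>i\<in>UNIV. c (Some i))" by (simp add: UNIV_option_conv prod.reindex c_def)
      also have "\<dots> = c (Some i1) * (\<Prod>i\<in>UNIV-{i1}. c (Some i))" by (simp add: prod.remove)
      also have "(\<Prod>i\<in>UNIV-{i1}. c (Some i)) = (\<Prod>i\<in>UNIV-{i1}. la * (if i = i2 then sgn be else 1))"
        by (rule prod.cong) (auto simp: c_def)
      also have "\<dots> = la ^ dd * (\<Prod>i\<in>UNIV-{i1}. (if i = i2 then sgn be else 1))"
        by (simp add: prod.distrib dd_def card_Diff_singleton_if)
      also have "(\<Prod>i\<in>UNIV-{i1}. (if i = i2 then sgn be else 1)) = sgn be"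
        using i2 by (simp add: prod.If_cases Int_absorb1)
      finally show ?thesis by (simp add: c_def)
    qed
    have "det cs.M0 = ze * la ^ dd * (sgn be * be)" using cs.det_M0 pc by (simp add: be_def mult_ac)
    also have "sgn be * be = \<bar>be\<bar>" by (cases "be > 0") (auto simp: sgn_if)
    also have "ze * la ^ dd * \<bar>be\<bar> = 1" using lapos be0 la3 by (simp add: ze_def)
    finally have detM0: "det cs.M0 = 1" .
    define U where "U = {M \<in> SLR. \<exists>\<gamma>\<in>SLZ. \<forall>k. norm (row k (\<gamma> ** M) - row k cs.M0) < cs.ka}"
    define Ne where "Ne = nat \<lceil>4/ze\<rceil>"
    have I_SLZ: "(mat 1 :: real^('d option)^('d option)) \<in> SLZ"
    proof -
      have "\<forall>i j. (mat 1 :: real^('d option)^('d option)) $ i $ j \<in> \<int>" by (simp add: mat_def)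
      then show ?thesis by (simp add: SLZ_def)
    qed
    show "\<exists>U Ne. U \<noteq> {} \<and> U \<subseteq> SLR \<and> openin (top_of_set SLR) U
           \<and> (\<forall>\<gamma>\<in>SLZ. \<forall>M\<in>U. \<gamma> ** M \<in> U)
           \<and> (\<forall>M\<in>U. \<forall>N\<ge>Ne. real (G_DN D N M) \<ge> 1 / ep)"
    proof (intro exI[of _ U] exI[of _ Ne] conjI)
      have "cs.M0 \<in> U" using detM0 I_SLZ cs.ka_pos by (auto simp: U_def SLR_def intro!: bexI[of _ "mat 1"])
      then show "U \<noteq> {}" by auto
      show "U \<subseteq> SLR" by (auto simp: U_def)
      show "openin (top_of_set SLR) U" unfolding U_def by (rule open_U)
      show "\<forall>\<gamma>\<in>SLZ. \<forall>M\<in>U. \<gamma> ** M \<in> U"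
      proof (intro ballI)
        fix g M :: "real^('d option)^('d option)" assume g: "g \<in> SLZ" and M: "M \<in> U"
        then obtain g0 :: "real^('d option)^('d option)" where g0: "g0 \<in> SLZ" "\<forall>k. norm (row k (g0 ** M) - row k cs.M0) < cs.ka" "M \<in> SLR"
          by (auto simp: U_def)
        obtain gi :: "real^('d option)^('d option)" where gi: "gi \<in> SLZ" "gi ** g = mat 1" using SLZ_inv[OF g] by auto
        have eq: "(g0 ** gi) ** (g ** M) = g0 ** M"
        proof -
          have "(g0 ** gi) ** (g ** M) = g0 ** ((gi ** g) ** M)" by (simp add: matrix_mul_assoc)
          then show ?thesis using gi(2) by simp
        qed
        have "g ** M \<in> SLR" using g g0(3) by (simp add: SLR_def SLZ_def det_mul)
        moreover have "g0 ** gi \<in> SLZ" using SLZ_mult g0(1) gi(1) by blast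
        moreover have "\<forall>k. norm (row k ((g0 ** gi) ** (g ** M)) - row k cs.M0) < cs.ka" using g0(2) eq by simp
        ultimately show "g ** M \<in> U" unfolding U_def by blast
      qed
      show "\<forall>M\<in>U. \<forall>N\<ge>Ne. 1 / ep \<le> real (G_DN D N M)"
      proof (intro ballI allI impI)
        fix M N assume M: "M \<in> U" and N: "Ne \<le> N"
        obtain g0 :: "real^('d option)^('d option)" where g0: "g0 \<in> SLZ" "\<forall>k. norm (row k (g0 ** M) - row k cs.M0) < cs.ka"
          using M by (auto simp: U_def)
        have g0': "\<forall>k. norm (row k (g0 ** M) - row k cs.M0) \<le> cs.ka" using g0(2) less_imp_le by blast
        have "4/ze \<le> real Ne" unfolding Ne_def by linarith
        also have "\<dots> \<le> real N" using N by simp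
        finally have N4: "4 / ze \<le> real N + 1/2" by linarith
        have cnt: "real (nat \<lfloor>1/(4*ze)\<rfloor>) \<le> real (G_DN D N M)"
          using cs.count[OF g0' N4] G_DN_SLZ[OF g0(1)] by simp
        have x2: "2 \<le> 1/(4*ze)" using ze_le ze_pos by (simp add: field_simps)
        have xe: "2/ep \<le> 1/(4*ze)" using ze_ep ze_pos ep by (simp add: field_simps)
        have "1/(4*ze) - 1 \<le> real (nat \<lfloor>1/(4*ze)\<rfloor>)" using x2 by linarith
        moreover have "1/ep \<le> 1/(4*ze) - 1"
        proof (cases "ep \<le> 1")
          case True
          then have "1 \<le> 1/ep" using ep by simp
          moreover have "2/ep = 1/ep + 1/ep" by simp
          ultimately show ?thesis using xe by linarith
        next
          case False
          then have "1/ep \<le> 1" using ep by simp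
          then show ?thesis using x2 by linarith
        qed
        ultimately show "1 / ep \<le> real (G_DN D N M)" using cnt by linarith
      qed
    qed
  qed simp
qed



end
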